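(* Let $n\ge 1$ and let $f(x)=x^n+\sum_{i=1}^{n}c_i x^{n-i}$ be an irreducible polynomial over $\mathrm{GF}(2)$ with $f(x)\neq x$. Let $B$ be the binary matrix with $2^n-1$ rows and columns indexed by $j=0,1,2,\ldots$, defined as follows: the rows are indexed by the nonzero initial states $s=(a_{-n},a_{-n+1},\ldots,a_{-1})\in \mathrm{GF}(2)^n\setminus\{0\}$, and the row indexed by $s$ is the sequence $a_0,a_1,a_2,\ldots$ determined by the recurrence $a_k=\sum_{i=1}^{n}c_i a_{k-i}$ (mod $2$) from the initial state $s$. Let $j_1,\ldots,j_n$ be $n$ distinct nonnegative integers, and let $T$ be the $(2^n-1)\times n$ submatrix of $B$ consisting of the columns indexed by $j_1,\ldots,j_n$. Then every nonzero binary $n$-tuple appears as a row of $T$ if and only if the $n$ columns of $T$ are linearly independent over $\mathrm{GF}(2)$.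
   Context: Equivalently, the rows of $B$ are all cyclic shifts of all nonzero sequences satisfying the linear recurrence associated with $f(x)$; since $f$ is irreducible with nonzero constant term, all these nonzero sequences are periodic with the same least period. *)

theory Defs
  imports "HOL-Library.Z2" "HOL-Computational_Algebra.Polynomial"
begin

text \<open>Linear recurrence over GF(2) (type bit) associated with a monic polynomial
  f(x) = x^n + sum_{i=1..n} c_i x^(n-i), where n = degree f and c_i = coeff f (n - i).
  A state is the list (a_(k-n), ..., a_(k-1)); one step appends
  a_k = sum_{i=1..n} c_i a_(k-i) and drops the first entry.\<close>

fun lfsr_state :: "bit poly \<Rightarrow> bit list \<Rightarrow> nat \<Rightarrow> bit list" where
  "lfsr_state f s 0 = s"
| "lfsr_state f s (Suc k) =
     (let t = lfsr_state f s k; n = degree f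
      in tl t @ [\<Sum>i = 1..n. coeff f (n - i) * t ! (n - i)])"

text \<open>Entry of B in the row indexed by the initial state s = (a_(-n),...,a_(-1))
  and column j: the term a_j of the recurrence sequence.\<close>
definition lfsr_entry :: "bit poly \<Rightarrow> bit list \<Rightarrow> nat \<Rightarrow> bit" where
  "lfsr_entry f s j = lfsr_state f s (Suc j) ! (degree f - 1)"

definition nonzero_states :: "nat \<Rightarrow> bit list set" where
  "nonzero_states n = {s. length s = n \<and> s \<noteq> replicate n 0}"

definition T_row :: "bit poly \<Rightarrow> nat list \<Rightarrow> bit list \<Rightarrow> bit list" where
  "T_row f js s = map (lfsr_entry f s) js"

definition T_columns_lin_indep :: "bit poly \<Rightarrow> nat list \<Rightarrow> bool" where
  "T_columns_lin_indep f js \<longleftrightarrow>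
     (\<forall>l :: nat \<Rightarrow> bit.
        (\<forall>s \<in> nonzero_states (degree f). (\<Sum>m < length js. l m * lfsr_entry f s (js ! m)) = 0)
        \<longrightarrow> (\<forall>m < length js. l m = 0))"

end

theory Submission imports Defs "Jordan_Normal_Form.Determinant" begin

definition ev :: "nat \<Rightarrow> nat \<Rightarrow> bit list" where
  "ev n i = (replicate n 0)[i := 1]"

lemma lfsr_len:
  assumes "length s = degree f" "degree f \<ge> 1"
  shows "length (lfsr_state f s k) = degree f"
  using assms by (induction k) (auto simp: Let_def)

lemma lfsr_lin:
  assumes "length s = degree f" "degree f \<ge> 1"
  shows "p < degree f \<Longrightarrow> lfsr_state f s k ! p =
     (\<Sum>i<degree f. s!i * lfsr_state f (ev (degree f) i) k ! p)"
proof (induction k arbitrary: p)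
  case 0
  have "(\<Sum>i<degree f. s!i * ev (degree f) i ! p) = (\<Sum>i<degree f. if i = p then s!p else 0)"
    by (rule sum.cong) (auto simp: ev_def nth_list_update 0)
  also have "\<dots> = s!p" using 0 by simp
  finally show ?case by simp
next
  case (Suc k)
  let ?n = "degree f"
  have lenE: "\<And>i. length (lfsr_state f (ev ?n i) k) = ?n"
    using assms by (intro lfsr_len) (auto simp: ev_def)
  have lenS: "length (lfsr_state f s k) = ?n" using assms by (intro lfsr_len) auto
  show ?case
  proof (cases "p < ?n - 1")
    case True
    then show ?thesis using lenE lenS Suc.IH[of "Suc p"]
      by (simp add: Let_def nth_append nth_tl)
  next
    case False
    then have p: "p = ?n - 1" using Suc.prems by simp
    have "lfsr_state f s (Suc k) ! p = (\<Sum>j = 1..?n. coeff f (?n - j) * lfsr_state f s k ! (?n - j))"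
      using p lenS assms by (simp add: Let_def nth_append)
    also have "\<dots> = (\<Sum>j = 1..?n. coeff f (?n - j) * (\<Sum>i<?n. s!i * lfsr_state f (ev ?n i) k ! (?n - j)))"
      by (rule sum.cong) (use Suc.IH in auto)
    also have "\<dots> = (\<Sum>i<?n. s!i * (\<Sum>j = 1..?n. coeff f (?n - j) * lfsr_state f (ev ?n i) k ! (?n - j)))"
      unfolding sum_distrib_left
      by (subst sum.swap) (intro sum.cong refl, simp only: mult.left_commute)
    also have "\<dots> = (\<Sum>i<?n. s!i * lfsr_state f (ev ?n i) (Suc k) ! p)"
      by (rule sum.cong) (use p lenE assms in \<open>auto simp: Let_def nth_append\<close>)
    finally show ?thesis .
  qed
qed

lemma entry_lin:
  assumes "length s = degree f" "degree f \<ge> 1"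
  shows "lfsr_entry f s j = (\<Sum>i<degree f. s!i * lfsr_entry f (ev (degree f) i) j)"
  unfolding lfsr_entry_def using lfsr_lin[OF assms, of "degree f - 1" "Suc j"] assms by simp

definition Amat :: "bit poly \<Rightarrow> nat list \<Rightarrow> bit mat" where
  "Amat f js = mat (degree f) (degree f) (\<lambda>(m,i). lfsr_entry f (ev (degree f) i) (js!m))"

lemma trow:
  assumes "length s = degree f" "degree f \<ge> 1" "m < degree f" "length js = degree f"
  shows "T_row f js s ! m = (Amat f js *\<^sub>v vec_of_list s) $ m"
proof -
  have "(Amat f js *\<^sub>v vec_of_list s) $ m = (\<Sum>i<degree f. lfsr_entry f (ev (degree f) i) (js!m) * s!i)"
    using assms by (simp add: Amat_def scalar_prod_def vec_of_list_index lessThan_atLeast0)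
  also have "\<dots> = (\<Sum>i<degree f. s!i * lfsr_entry f (ev (degree f) i) (js!m))"
    by (simp only: mult.commute)
  also have "\<dots> = lfsr_entry f s (js!m)" using entry_lin[OF assms(1,2)] by simp
  finally show ?thesis using assms by (simp add: T_row_def)
qed

lemma zero_row:
  assumes "degree f \<ge> 1" "length js = degree f"
  shows "T_row f js (replicate (degree f) 0) = replicate (degree f) 0"
  by (rule nth_equalityI) (use assms entry_lin[of "replicate (degree f) 0" f] in \<open>auto simp: T_row_def\<close>)

lemma vcarr: "length v = n \<Longrightarrow> vec_of_list v \<in> carrier_vec n"
  unfolding carrier_vec_def mem_Collect_eq dim_vec_of_list .

lemma T_row_nth: "k < length js \<Longrightarrow> T_row f js s ! k = lfsr_entry f s (js!k)"
  by (simp add: T_row_def)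

theorem lemma4:
  fixes f :: "bit poly" and n :: nat and js :: "nat list"
  assumes "n \<ge> 1"
    and "degree f = n"
    and "lead_coeff f = 1"
    and "irreducible f"
    and "f \<noteq> [:0, 1:]"
    and "length js = n"
    and "distinct js"
  shows "(\<forall>v. length v = n \<and> v \<noteq> replicate n 0 \<longrightarrow>
            (\<exists>s \<in> nonzero_states n. T_row f js s = v))
         \<longleftrightarrow> T_columns_lin_indep f js"
proof
  assume surj: "\<forall>v. length v = n \<and> v \<noteq> replicate n 0 \<longrightarrow>
            (\<exists>s \<in> nonzero_states n. T_row f js s = v)"
  show "T_columns_lin_indep f js"
    unfolding T_columns_lin_indep_def
  proof (intro allI impI)
    fix l :: "nat \<Rightarrow> bit" and m
    assume h: "\<forall>s\<in>nonzero_states (degree f). (\<Sum>m<length js. l m * lfsr_entry f s (js ! m)) = 0"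
      and m: "m < length js"
    have "ev n m \<noteq> replicate n 0" using m assms by (auto simp: ev_def list_eq_iff_nth_eq)
    moreover have "length (ev n m) = n" by (simp add: ev_def)
    ultimately obtain s where s: "s \<in> nonzero_states n" "T_row f js s = ev n m"
      using surj by blast
    have "0 = (\<Sum>k<n. l k * lfsr_entry f s (js ! k))" using h s assms by simp
    also have "\<dots> = (\<Sum>k<n. l k * ev n m ! k)"
    proof (intro sum.cong refl)
      fix k assume "k \<in> {..<n}"
      then have "lfsr_entry f s (js ! k) = ev n m ! k"
        using T_row_nth[of k js f s] s(2) assms by simp
      then show "l k * lfsr_entry f s (js ! k) = l k * ev n m ! k" by simp
    qed
    also have "\<dots> = (\<Sum>k<n. if k = m then l m else 0)"
      by (intro sum.cong refl) (auto simp: ev_def nth_list_update)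
    also have "\<dots> = l m" using m assms by simp
    finally show "l m = 0" by simp
  qed
next
  assume ind: "T_columns_lin_indep f js"
  let ?A = "Amat f js"
  have A: "?A \<in> carrier_mat n n" using assms by (simp add: Amat_def)
  have det: "det ?A \<noteq> 0"
  proof
    assume "det ?A = 0"
    then have "det (transpose_mat ?A) = 0" using det_transpose[OF A] by simp
    then obtain w where w: "w \<in> carrier_vec n" "w \<noteq> 0\<^sub>v n" "transpose_mat ?A *\<^sub>v w = 0\<^sub>v n"
      using det_0_iff_vec_prod_zero[of "transpose_mat ?A" n] A by auto
    have "\<forall>m < length js. w $ m = 0"
      using ind unfolding T_columns_lin_indep_def
    proof (rule allE, elim impE)
      show "\<forall>s\<in>nonzero_states (degree f). (\<Sum>m<length js. w $ m * lfsr_entry f s (js ! m)) = 0"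
      proof
        fix s assume s: "s \<in> nonzero_states (degree f)"
        have ls: "length s = n" using s assms by (simp add: nonzero_states_def)
        have "(\<Sum>m<length js. w $ m * lfsr_entry f s (js ! m)) = (\<Sum>m<n. w $ m * (?A *\<^sub>v vec_of_list s) $ m)"
        proof (intro sum.cong)
          show "{..<length js} = {..<n}" using assms by simp
          fix k assume "k \<in> {..<n}"
          then have "lfsr_entry f s (js ! k) = (?A *\<^sub>v vec_of_list s) $ k"
            using T_row_nth[of k js f s] trow[of s f k js] assms ls by simp
          then show "w $ k * lfsr_entry f s (js ! k) = w $ k * (?A *\<^sub>v vec_of_list s) $ k" by simp
        qed
        also have "\<dots> = w \<bullet> (?A *\<^sub>v vec_of_list s)"
        proof -
          have "dim_vec (?A *\<^sub>v vec_of_list s) = n" using A by simp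
          then show ?thesis unfolding scalar_prod_def lessThan_atLeast0 by simp
        qed
        also have "\<dots> = (transpose_mat ?A *\<^sub>v w) \<bullet> vec_of_list s"
        proof -
          have "vec_of_list s \<in> carrier_vec n" using ls by (rule vcarr)
          from transpose_vec_mult_scalar[OF A this w(1)] show ?thesis by simp
        qed
        also have "\<dots> = 0"
        proof -
          have "vec_of_list s \<in> carrier_vec n" using ls by (rule vcarr)
          then show ?thesis unfolding w(3) by (rule scalar_prod_left_zero)
        qed
        finally show "(\<Sum>m<length js. w $ m * lfsr_entry f s (js ! m)) = 0" .
      qed
    qed auto
    then have "w = 0\<^sub>v n" using w(1) assms by (intro eq_vecI) auto
    with w(2) show False by simp
  qed
  then have det1: "det ?A = 1" by (simp only: bit_not_zero_iff)
  show "\<forall>v. length v = n \<and> v \<noteq> replicate n 0 \<longrightarrow>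
            (\<exists>s \<in> nonzero_states n. T_row f js s = v)"
  proof (intro allI impI)
    fix v :: "bit list" assume v: "length v = n \<and> v \<noteq> replicate n 0"
    let ?x = "adj_mat ?A *\<^sub>v vec_of_list v"
    have adjA: "adj_mat ?A \<in> carrier_mat n n" using adj_mat(1)[OF A] .
    have vv: "vec_of_list v \<in> carrier_vec n" using v by (intro vcarr) simp
    have AA: "?A * adj_mat ?A = 1\<^sub>m n"
      unfolding adj_mat(2)[OF A] det1 by (intro eq_matI) auto
    have Ax: "?A *\<^sub>v ?x = vec_of_list v"
    proof -
      have "?A *\<^sub>v ?x = (?A * adj_mat ?A) *\<^sub>v vec_of_list v"
        using assoc_mult_mat_vec[OF A adjA vv] by (rule sym)
      also have "\<dots> = 1\<^sub>m n *\<^sub>v vec_of_list v" unfolding AA ..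
      also have "\<dots> = vec_of_list v" using vv by (rule one_mult_mat_vec)
      finally show ?thesis .
    qed
    let ?s = "list_of_vec ?x"
    have "dim_vec ?x = n" using adjA by (simp only: dim_mult_mat_vec carrier_matD)
    then have ls: "length ?s = n" by (simp only: length_list_of_vec)
    have row: "T_row f js ?s = v"
    proof (rule nth_equalityI)
      show "length (T_row f js ?s) = length v" using v assms by (simp add: T_row_def)
      fix m assume "m < length (T_row f js ?s)"
      then have m: "m < n" using assms by (simp add: T_row_def)
      show "T_row f js ?s ! m = v ! m"
      proof -
        have "T_row f js ?s ! m = (?A *\<^sub>v vec_of_list ?s) $ m"
          using trow[of ?s f m js] ls assms(1,2,6) m by simp
        also have "\<dots> = v ! m" unfolding vec_list Ax vec_of_list_index ..
        finally show ?thesis .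
      qed
    qed
    have "?s \<noteq> replicate n 0"
    proof
      assume "?s = replicate n 0"
      then have "T_row f js ?s = replicate n 0" using zero_row[of f js] assms by simp
      then show False using row v by simp
    qed
    then have "?s \<in> nonzero_states n" using ls unfolding nonzero_states_def by blast
    then show "\<exists>s \<in> nonzero_states n. T_row f js s = v" using row by blast
  qed
qed

end
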